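(* For each nonnegative integer $n$, \[ \sum_{k=0}^{n} (-1)^k \overline{{n \brack k}}_{q,1} = \begin{cases} 0 &\text{if $n$ is odd,} \\ \sum_{j=-n/2}^{n/2} (-1)^j q^{j^2} &\text{if $n$ is even.} \end{cases} \]
   Context: An overpartition is a partition in which the last occurrence of each distinct part size may be overlined; its weight $|\lambda|$ is the sum of its parts. For integers $0\le k\le n$, $\overline{{n \brack k}}_{q,1}=\sum_{\lambda} q^{|\lambda|}$, the sum over all overpartitions $\lambda$ with largest part at most $n-k$ and at most $k$ parts (i.e. the generating function for overpartitions fitting inside an $(n-k)\times k$ rectangle). *)

theory Defs
  imports Main
begin

text \<open>An overpartition is encoded as a pair (xs, S): xs is the list of parts in
nonincreasing order (all parts positive), and S is the set of overlined part sizes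
(the last occurrence of each size in S is overlined), so S is a subset of set xs.\<close>

definition overpartitions_in_box :: "nat \<Rightarrow> nat \<Rightarrow> (nat list \<times> nat set) set" where
  "overpartitions_in_box a b =
     {(xs, S). sorted_wrt (\<ge>) xs \<and> (\<forall>x\<in>set xs. 0 < x \<and> x \<le> a) \<and>
               length xs \<le> b \<and> S \<subseteq> set xs}"

definition over_qbinom :: "nat \<Rightarrow> nat \<Rightarrow> 'a::comm_ring_1 \<Rightarrow> 'a" where
  "over_qbinom n k q = (\<Sum>(xs, S) \<in> overpartitions_in_box (n - k) k. q ^ sum_list xs)"

end

theory Submission
  imports Defs
begin


abbreviation "opb \<equiv> overpartitions_in_box"

lemma opb_0b_iff: "(xs, S) \<in> opb 0 b \<longleftrightarrow> xs = [] \<and> S = {}"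
  unfolding overpartitions_in_box_def apply simp
  apply (cases xs) apply auto
  done

lemma opb_0b: "opb 0 b = {([], {})}"
proof (rule set_eqI)
  fix p show "p \<in> opb 0 b \<longleftrightarrow> p \<in> {([], {})}" using opb_0b_iff by (cases p) simp
qed

lemma opb_a0: "opb a 0 = {([], {})}"
  unfolding overpartitions_in_box_def by auto

lemma opb_finite: "finite (opb a b)"
proof -
  have "opb a b \<subseteq> {xs. set xs \<subseteq> {1..a} \<and> length xs \<le> b} \<times> Pow {1..a}"
    unfolding overpartitions_in_box_def by (auto; fastforce)
  moreover have "finite ({xs. set xs \<subseteq> {1..a} \<and> length xs \<le> b} \<times> Pow {1..a})"
    by (intro finite_cartesian_product finite_lists_length_le) auto
  ultimately show ?thesis by (rule finite_subset)
qed

lemma opb_Suc: "opb (Suc a) (Suc b) =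
   opb a (Suc b) \<union> (\<lambda>(ys,S). (Suc a # ys, S)) ` opb (Suc a) b
   \<union> (\<lambda>(ys,S). (Suc a # ys, insert (Suc a) S)) ` opb a b"
proof (rule set_eqI, rule iffI)
  fix p assume p: "p \<in> opb (Suc a) (Suc b)"
  obtain xs S where pe: "p = (xs, S)" by (cases p)
  have xs: "sorted_wrt (\<ge>) xs" "\<forall>x\<in>set xs. 0 < x \<and> x \<le> Suc a" "length xs \<le> Suc b" "S \<subseteq> set xs"
    using p pe unfolding overpartitions_in_box_def by auto
  show "p \<in> opb a (Suc b) \<union> (\<lambda>(ys,S). (Suc a # ys, S)) ` opb (Suc a) b
   \<union> (\<lambda>(ys,S). (Suc a # ys, insert (Suc a) S)) ` opb a b"
  proof (cases xs)
    case Nil then show ?thesis using xs pe unfolding overpartitions_in_box_def by auto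
  next
    case (Cons x ys)
    show ?thesis
    proof (cases "x = Suc a")
      case False
      have x: "x \<le> a" "\<forall>y\<in>set ys. y \<le> x" using xs Cons False by auto
      have "\<forall>y\<in>set xs. 0 < y \<and> y \<le> a"
      proof
        fix y assume "y \<in> set xs"
        then show "0 < y \<and> y \<le> a" using x xs(2) Cons by auto
      qed
      then show ?thesis using xs pe unfolding overpartitions_in_box_def by auto
    next
      case True
      show ?thesis
      proof (cases "Suc a \<in> S \<and> Suc a \<notin> set ys")
        case True2: True
        have "\<forall>y\<in>set ys. 0 < y \<and> y \<le> Suc a" using xs(2) Cons by simp
        then have "\<forall>y\<in>set ys. 0 < y \<and> y \<le> a" using True2 by (auto simp: le_Suc_eq)
        then have "(ys, S - {Suc a}) \<in> opb a b"
          using xs Cons True unfolding overpartitions_in_box_def by auto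
        moreover have "p = (Suc a # ys, insert (Suc a) (S - {Suc a}))"
          using pe Cons True True2 by auto
        ultimately have "p \<in> (\<lambda>(ys,S). (Suc a # ys, insert (Suc a) S)) ` opb a b"
          by (intro rev_image_eqI[of "(ys, S - {Suc a})"]) simp_all
        then show ?thesis by blast
      next
        case False2: False
        have "(ys, S) \<in> opb (Suc a) b"
          using xs Cons True False2 unfolding overpartitions_in_box_def by auto
        moreover have "p = (Suc a # ys, S)" using pe Cons True by auto
        ultimately have "p \<in> (\<lambda>(ys,S). (Suc a # ys, S)) ` opb (Suc a) b"
          by (intro rev_image_eqI[of "(ys, S)"]) simp_all
        then show ?thesis by blast
      qed
    qed
  qed
next
  fix p assume "p \<in> opb a (Suc b) \<union> (\<lambda>(ys,S). (Suc a # ys, S)) ` opb (Suc a) b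
   \<union> (\<lambda>(ys,S). (Suc a # ys, insert (Suc a) S)) ` opb a b"
  then show "p \<in> opb (Suc a) (Suc b)"
    unfolding overpartitions_in_box_def by fastforce
qed



fun PP :: "'a::comm_ring_1 \<Rightarrow> nat \<Rightarrow> nat \<Rightarrow> 'a" where
  "PP q 0 b = 1"
| "PP q (Suc a) 0 = 1"
| "PP q (Suc a) (Suc b) = PP q a (Suc b) + q ^ Suc a * (PP q (Suc a) b + PP q a b)"

declare PP.simps(3)[simp del]
lemmas R2 = PP.simps(3)

definition W :: "'a::comm_ring_1 \<Rightarrow> nat \<Rightarrow> nat \<Rightarrow> 'a" where
  "W q a b = (\<Sum>(xs, S) \<in> opb a b. q ^ sum_list xs)"

lemma W_rec: "W q (Suc a) (Suc b) = W q a (Suc b) + q ^ Suc a * (W q (Suc a) b + W q a b)"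
proof -
  let ?f = "\<lambda>(ys::nat list, S::nat set). (Suc a # ys, S)"
  let ?g = "\<lambda>(ys::nat list, S::nat set). (Suc a # ys, insert (Suc a) S)"
  let ?h = "\<lambda>(xs::nat list, S::nat set). q ^ sum_list xs"
  have fin: "finite (opb a b')" "finite (opb (Suc a) b)" for b' by (rule opb_finite)+
  have d1: "opb a (Suc b) \<inter> (?f ` opb (Suc a) b \<union> ?g ` opb a b) = {}"
    unfolding overpartitions_in_box_def by (auto; fastforce)
  have d2: "?f ` opb (Suc a) b \<inter> ?g ` opb a b = {}"
  proof -
    have "Suc a \<notin> set ys" if "(ys, S) \<in> opb a b" for ys S
      using that unfolding overpartitions_in_box_def by auto
    moreover have "S \<subseteq> set ys" if "(ys, S) \<in> opb (Suc a) b" for ys S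
      using that unfolding overpartitions_in_box_def by auto
    ultimately show ?thesis by fastforce
  qed
  have inf: "inj_on ?f (opb (Suc a) b)" by (auto simp: inj_on_def)
  have ing: "inj_on ?g (opb a b)"
  proof (rule inj_onI)
    fix x y assume x: "x \<in> opb a b" and y: "y \<in> opb a b" and e: "?g x = ?g y"
    obtain xs S ys T where xy: "x = (xs, S)" "y = (ys, T)" by fastforce
    have "Suc a \<notin> set xs" "Suc a \<notin> set ys" "S \<subseteq> set xs" "T \<subseteq> set ys"
      using x y xy unfolding overpartitions_in_box_def by auto
    then have "Suc a \<notin> S" "Suc a \<notin> T" by auto
    then show "x = y" using e xy by (auto simp: insert_eq_iff)
  qed
  have "W q (Suc a) (Suc b) = W q a (Suc b) + (sum ?h (?f ` opb (Suc a) b) + sum ?h (?g ` opb a b))"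
  proof -
    have e1: "sum ?h (?f ` opb (Suc a) b \<union> ?g ` opb a b) = sum ?h (?f ` opb (Suc a) b) + sum ?h (?g ` opb a b)"
      by (rule sum.union_disjoint) (use fin d2 in auto)
    have "sum ?h (opb a (Suc b) \<union> (?f ` opb (Suc a) b \<union> ?g ` opb a b)) = sum ?h (opb a (Suc b)) + sum ?h (?f ` opb (Suc a) b \<union> ?g ` opb a b)"
      by (rule sum.union_disjoint) (use fin d1 in auto)
    then show ?thesis unfolding W_def opb_Suc Un_assoc e1 by simp
  qed
  also have "sum ?h (?f ` opb (Suc a) b) = q ^ Suc a * W q (Suc a) b"
    unfolding W_def sum.reindex[OF inf] sum_distrib_left
    by (rule sum.cong) (auto simp: power_add)
  also have "sum ?h (?g ` opb a b) = q ^ Suc a * W q a b"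
    unfolding W_def sum.reindex[OF ing] sum_distrib_left
    by (rule sum.cong) (auto simp: power_add)
  finally show ?thesis by (simp add: algebra_simps)
qed

lemma W_PP: "W q a b = PP q a b"
proof (induction a arbitrary: b)
  case 0 then show ?case by (simp add: W_def opb_0b)
next
  case (Suc a)
  then show ?case
  proof (induction b)
    case 0 then show ?case by (simp add: W_def opb_a0)
  next
    case (Suc b) then show ?case by (simp add: W_rec R2)
  qed
qed



lemma PP_a0[simp]: "PP q a 0 = 1" by (cases a) auto

lemma R1: "PP q (Suc a) (Suc b) = PP q (Suc a) b + q ^ Suc b * (PP q a (Suc b) + PP q a b)"
proof (induction a arbitrary: b)
  case 0
  show ?case
  proof (induction b)
    case 0 then show ?case by (simp add: R2)
  next
    case (Suc b)
    have D: "PP q 1 (Suc b) = 1 + q * (PP q 1 b + 1)" using R2[of q 0 b] by simp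
    have D2: "PP q 1 (Suc (Suc b)) = 1 + q * (PP q 1 (Suc b) + 1)" using R2[of q 0 "Suc b"] by simp
    have I: "PP q 1 (Suc b) = PP q 1 b + 2 * q ^ Suc b" using Suc by simp
    have "PP q 1 (Suc (Suc b)) = 1 + q * ((PP q 1 b + 2 * q ^ Suc b) + 1)" using D2 I by simp
    also have "\<dots> = (1 + q * (PP q 1 b + 1)) + 2 * q ^ Suc (Suc b)" by (simp add: algebra_simps)
    also have "\<dots> = PP q 1 (Suc b) + 2 * q ^ Suc (Suc b)" using D by simp
    finally show ?case by simp
  qed
next
  case (Suc a)
  note outer = Suc.IH
  show ?case
  proof (induction b)
    case 0
    have D: "PP q (Suc (Suc a)) 1 = PP q (Suc a) 1 + 2 * q ^ Suc (Suc a)" using R2[of q "Suc a" 0] by simp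
    have D2: "PP q (Suc a) 1 = PP q a 1 + q ^ Suc a * (1 + PP q a 0)" using R2[of q a 0] by simp
    have I: "PP q (Suc a) 1 = 1 + q * (PP q a 1 + PP q a 0)" using Suc.IH[of 0] by simp
    have "PP q (Suc (Suc a)) 1 = (1 + q * (PP q a 1 + PP q a 0)) + 2 * q ^ Suc (Suc a)" using D I by simp
    also have "\<dots> = 1 + q * (PP q (Suc a) 1 + 1)" using D2 by (simp add: algebra_simps)
    finally show ?case by simp
  next
    case (Suc b)
    note IH = outer
    define p where "p = PP q"
    define A where "A = p (Suc a) (Suc (Suc b))"
    define B where "B = p (Suc (Suc a)) (Suc b)"
    define C where "C = p (Suc a) (Suc b)"
    have D1: "p (Suc (Suc a)) (Suc (Suc b)) = A + q ^ Suc (Suc a) * (B + C)"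
      unfolding A_def B_def C_def p_def by (rule R2)
    have I1: "A = C + q ^ Suc (Suc b) * (p a (Suc (Suc b)) + p a (Suc b))"
      unfolding A_def C_def p_def by (rule IH)
    have I2: "B = p (Suc (Suc a)) b + q ^ Suc b * (C + p (Suc a) b)"
      unfolding B_def C_def p_def by (rule Suc.IH)
    have I3: "C = p (Suc a) b + q ^ Suc b * (p a (Suc b) + p a b)"
      unfolding C_def p_def by (rule IH)
    have D2: "B = C + q ^ Suc (Suc a) * (p (Suc (Suc a)) b + p (Suc a) b)"
      unfolding B_def C_def p_def by (rule R2)
    have D3: "A = p a (Suc (Suc b)) + q ^ Suc a * (C + p a (Suc b))"
      unfolding A_def C_def p_def by (rule R2)
    have D4: "C = p a (Suc b) + q ^ Suc a * (p (Suc a) b + p a b)"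
      unfolding C_def p_def by (rule R2)
    have "p (Suc (Suc a)) (Suc (Suc b)) = A + q ^ Suc (Suc a) * B + q ^ Suc (Suc a) * C"
      using D1 by (simp add: algebra_simps)
    also have "\<dots> = (C + q ^ Suc (Suc b) * (p a (Suc (Suc b)) + p a (Suc b)))
       + q ^ Suc (Suc a) * (p (Suc (Suc a)) b + q ^ Suc b * (C + p (Suc a) b))
       + q ^ Suc (Suc a) * (p (Suc a) b + q ^ Suc b * (p a (Suc b) + p a b))"
      using I1 I2 I3 by simp
    also have "\<dots> = (C + q ^ Suc (Suc a) * (p (Suc (Suc a)) b + p (Suc a) b))
       + q ^ Suc (Suc b) * (p a (Suc (Suc b)) + q ^ Suc a * (C + p a (Suc b)))
       + q ^ Suc (Suc b) * (p a (Suc b) + q ^ Suc a * (p (Suc a) b + p a b))"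
      by (simp add: algebra_simps)
    also have "\<dots> = B + q ^ Suc (Suc b) * A + q ^ Suc (Suc b) * C"
      using D2 D3 D4 by simp
    finally show ?case unfolding B_def A_def C_def p_def by (simp add: algebra_simps)
  qed
qed



definition AA :: "'a::comm_ring_1 \<Rightarrow> nat \<Rightarrow> 'a" where
  "AA q n = (\<Sum>k\<le>n. (-1) ^ k * PP q (n - k) k)"
definition BB :: "'a::comm_ring_1 \<Rightarrow> nat \<Rightarrow> 'a" where
  "BB q n = (\<Sum>k\<le>n. (-1) ^ k * q ^ k * PP q (n - k) k)"

lemma F1: "AA q (Suc m) = (\<Sum>i\<le>m. (-1) ^ i * PP q (Suc (m - i)) i) + (-1) ^ Suc m"
  unfolding AA_def sum.atMost_Suc by (auto intro!: sum.cong simp: Suc_diff_le)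

lemma F2: "BB q (Suc m) = 1 + (\<Sum>i\<le>m. (-1) ^ Suc i * q ^ Suc i * PP q (m - i) (Suc i))"
  unfolding BB_def sum.atMost_Suc_shift by simp

lemma AA_shift: "AA q (Suc (Suc n)) = 1 + (\<Sum>i\<le>n. (-1) ^ Suc i * PP q (Suc (n - i)) (Suc i)) + (-1) ^ Suc (Suc n)"
  unfolding AA_def
  apply (subst sum.atMost_Suc_shift) apply (subst sum.atMost_Suc)
  by (auto intro!: sum.cong simp: Suc_diff_le)

lemma BB_shift: "BB q (Suc (Suc n)) = 1 + (\<Sum>i\<le>n. (-1) ^ Suc i * q ^ Suc i * PP q (Suc (n - i)) (Suc i)) + (-1) ^ Suc (Suc n) * q ^ Suc (Suc n)"
  unfolding BB_def
  apply (subst sum.atMost_Suc_shift) apply (subst sum.atMost_Suc)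
  by (auto intro!: sum.cong simp: Suc_diff_le)

lemma claim1: "AA q (Suc (Suc n)) = - AA q (Suc n) + BB q (Suc n) - q * BB q n"
proof -
  have t: "(-1) ^ Suc i * PP q (Suc (n - i)) (Suc i) =
      (-1) ^ Suc i * PP q (Suc (n - i)) i + (-1) ^ Suc i * q ^ Suc i * PP q (n - i) (Suc i)
      + (- q) * ((-1) ^ i * q ^ i * PP q (n - i) i)" for i
    unfolding R1 by (simp add: algebra_simps)
  have s1: "(\<Sum>i\<le>n. (-1) ^ Suc i * PP q (Suc (n - i)) i) = - (AA q (Suc n) - (-1) ^ Suc n)"
    unfolding F1 by (simp add: sum_negf)
  have s3: "(\<Sum>i\<le>n. (- q) * ((-1) ^ i * q ^ i * PP q (n - i) i)) = - q * BB q n"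
    unfolding BB_def sum_distrib_left by simp
  show ?thesis
    unfolding AA_shift t sum.distrib s1 s3 F2 by (simp add: algebra_simps)
qed

lemma claim2: "BB q (Suc (Suc n)) = BB q (Suc n) - q ^ Suc (Suc n) * (AA q (Suc n) + AA q n)"
proof -
  define c where "c = q ^ Suc (Suc n)"
  have t: "(-1) ^ Suc i * q ^ Suc i * PP q (Suc (n - i)) (Suc i) =
      (-1) ^ Suc i * q ^ Suc i * PP q (n - i) (Suc i) + (- c) * ((-1) ^ i * PP q (Suc (n - i)) i) + (- c) * ((-1) ^ i * PP q (n - i) i)" if "i \<le> n" for i
  proof -
    have "q ^ Suc i * q ^ Suc (n - i) = c"
    proof -
      have "Suc i + Suc (n - i) = Suc (Suc n)" using that by simp
      then show ?thesis unfolding c_def by (metis power_add)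
    qed
    note hc = this
    have "(-1) ^ Suc i * q ^ Suc i * PP q (Suc (n - i)) (Suc i) =
      (-1) ^ Suc i * q ^ Suc i * PP q (n - i) (Suc i) + (-1) ^ Suc i * (q ^ Suc i * q ^ Suc (n - i)) * (PP q (Suc (n - i)) i + PP q (n - i) i)"
      unfolding R2 by (simp add: algebra_simps)
    also have "\<dots> = (-1) ^ Suc i * q ^ Suc i * PP q (n - i) (Suc i) + (-1) ^ Suc i * c * (PP q (Suc (n - i)) i + PP q (n - i) i)"
      unfolding hc ..
    finally show ?thesis by (simp add: algebra_simps)
  qed
  have s2: "(\<Sum>i\<le>n. (- c) * ((-1) ^ i * PP q (Suc (n - i)) i)) = - c * (AA q (Suc n) - (-1) ^ Suc n)"
    unfolding F1 by (simp add: sum_negf sum_distrib_left)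
  have s3: "(\<Sum>i\<le>n. (- c) * ((-1) ^ i * PP q (n - i) i)) = - c * AA q n"
    unfolding AA_def sum_distrib_left by simp
  have e: "(\<Sum>i\<le>n. (-1) ^ Suc i * q ^ Suc i * PP q (Suc (n - i)) (Suc i)) =
     (\<Sum>i\<le>n. (-1) ^ Suc i * q ^ Suc i * PP q (n - i) (Suc i) + (- c) * ((-1) ^ i * PP q (Suc (n - i)) i) + (- c) * ((-1) ^ i * PP q (n - i) i))"
    by (rule sum.cong[OF refl], rule t, simp)
  have "BB q (Suc (Suc n)) = 1 + (\<Sum>i\<le>n. (-1) ^ Suc i * q ^ Suc i * PP q (Suc (n - i)) (Suc i)) + (-1) ^ Suc (Suc n) * c"
    unfolding c_def by (rule BB_shift)
  also have "\<dots> = 1 + ((\<Sum>i\<le>n. (-1) ^ Suc i * q ^ Suc i * PP q (n - i) (Suc i)) + (- c * (AA q (Suc n) - (-1) ^ Suc n)) + (- c * AA q n)) + (-1) ^ Suc (Suc n) * c"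
    by (simp only: e sum.distrib s2 s3)
  also have "\<dots> = BB q (Suc n) - c * (AA q (Suc n) + AA q n)"
    unfolding F2 by (simp add: algebra_simps)
  finally show ?thesis unfolding c_def .
qed



lemma AA_rec: "AA q (Suc (Suc (Suc (Suc n)))) =
   (1 - q ^ Suc (Suc (Suc n))) * AA q (Suc (Suc n)) + q ^ Suc (Suc (Suc n)) * AA q n"
proof -
  define y where "y = q ^ Suc (Suc n)"
  have xy: "q ^ Suc (Suc (Suc n)) = q * y" unfolding y_def by simp
  have c1a: "AA q (Suc (Suc (Suc (Suc n)))) = - AA q (Suc (Suc (Suc n))) + BB q (Suc (Suc (Suc n))) - q * BB q (Suc (Suc n))"
    by (rule claim1)
  have c1b: "BB q (Suc (Suc n)) - q * BB q (Suc n) = AA q (Suc (Suc (Suc n))) + AA q (Suc (Suc n))"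
    using claim1[of q "Suc n"] by (simp add: algebra_simps)
  have c2a: "BB q (Suc (Suc (Suc n))) = BB q (Suc (Suc n)) - q * y * (AA q (Suc (Suc n)) + AA q (Suc n))"
    using claim2[of q "Suc n"] unfolding xy .
  have c2b: "BB q (Suc (Suc n)) = BB q (Suc n) - y * (AA q (Suc n) + AA q n)"
    using claim2[of q n] unfolding y_def .
  have "AA q (Suc (Suc (Suc (Suc n)))) = - AA q (Suc (Suc (Suc n))) + (BB q (Suc (Suc n)) - q * y * (AA q (Suc (Suc n)) + AA q (Suc n))) - q * (BB q (Suc n) - y * (AA q (Suc n) + AA q n))"
    using c1a c2a c2b by simp
  also have "\<dots> = - AA q (Suc (Suc (Suc n))) + (BB q (Suc (Suc n)) - q * BB q (Suc n)) - q * y * AA q (Suc (Suc n)) + q * y * AA q n"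
    by (simp add: algebra_simps)
  also have "\<dots> = (1 - q * y) * AA q (Suc (Suc n)) + q * y * AA q n"
    unfolding c1b by (simp add: algebra_simps)
  finally show ?thesis unfolding xy .
qed

lemma AA0: "AA q 0 = 1" by (simp add: AA_def)
lemma AA1: "AA q 1 = 0" by (simp add: AA_def)
lemma PP11: "PP q 1 1 = 1 + 2 * q" using R2[of q 0 0] by simp
lemma AA2: "AA q 2 = 1 - 2 * q"
  by (simp add: AA_def numeral_2_eq_2 PP11[simplified])
lemma AA3: "AA q 3 = 0"
proof -
  have a: "PP q 2 1 = 1 + 2 * q + 2 * q ^ 2"
    using R2[of q 1 0] PP11[of q] by (simp add: numeral_2_eq_2 algebra_simps)
  have b: "PP q 1 2 = 1 + 2 * q + 2 * q ^ 2"
    using R2[of q 0 1] PP11[of q] by (simp add: numeral_2_eq_2 algebra_simps power2_eq_square)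
  have "AA q 3 = 1 - PP q 2 1 + PP q 1 2 - 1"
    by (simp add: AA_def numeral_3_eq_3 numeral_2_eq_2)
  then show ?thesis using a b by simp
qed

lemma AA_odd: "AA q (2 * m + 1) = 0"
proof (induction m rule: nat_less_induct)
  case (1 m)
  show ?case
  proof (cases m)
    case 0 then show ?thesis using AA1[of q] by simp
  next
    case (Suc m')
    show ?thesis
    proof (cases m')
      case 0 then show ?thesis using AA3[of q] Suc by (simp add: numeral_3_eq_3)
    next
      case (Suc m'')
      have e: "2 * m + 1 = Suc (Suc (Suc (Suc (2 * m'' + 1))))" using \<open>m = Suc m'\<close> Suc by simp
      have h1: "AA q (Suc (Suc (2 * m'' + 1))) = 0"
        using "1"[rule_format, of "Suc m''"] \<open>m = Suc m'\<close> Suc by simp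
      have h2: "AA q (2 * m'' + 1) = 0"
        using "1"[rule_format, of m''] \<open>m = Suc m'\<close> Suc by simp
      show ?thesis unfolding e AA_rec h1 h2 by simp
    qed
  qed
qed

lemma AA_even_step: "AA q (2 * m + 2) - AA q (2 * m) = 2 * (-1) ^ Suc m * q ^ (Suc m)\<^sup>2"
proof (induction m)
  case 0 then show ?case using AA0[of q] AA2[of q, unfolded numeral_2_eq_2] by simp
next
  case (Suc m)
  have e1: "2 * Suc m + 2 = Suc (Suc (Suc (Suc (2 * m))))" by simp
  have e2: "2 * Suc m = Suc (Suc (2 * m))" by simp
  have "AA q (2 * Suc m + 2) - AA q (2 * Suc m) = - (q ^ Suc (Suc (Suc (2 * m)))) * (AA q (2 * m + 2) - AA q (2 * m))"
  proof -
    have r: "AA q (Suc (Suc (Suc (Suc (2 * m))))) = (1 - q ^ Suc (Suc (Suc (2 * m)))) * AA q (Suc (Suc (2 * m))) + q ^ Suc (Suc (Suc (2 * m))) * AA q (2 * m)"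
      by (rule AA_rec)
    have e3: "2 * m + 2 = Suc (Suc (2 * m))" by simp
    show ?thesis unfolding e1 unfolding e2 e3 r by (simp add: algebra_simps)
  qed
  also have "\<dots> = - (q ^ Suc (Suc (Suc (2 * m)))) * (2 * (-1) ^ Suc m * q ^ (Suc m)\<^sup>2)"
    unfolding Suc ..
  also have "\<dots> = 2 * (-1) ^ Suc (Suc m) * (q ^ Suc (Suc (Suc (2 * m))) * q ^ (Suc m)\<^sup>2)"
    by (simp add: algebra_simps)
  also have "q ^ Suc (Suc (Suc (2 * m))) * q ^ (Suc m)\<^sup>2 = q ^ (Suc (Suc m))\<^sup>2"
  proof -
    have "Suc (Suc (Suc (2 * m))) + (Suc m)\<^sup>2 = (Suc (Suc m))\<^sup>2" by (simp add: power2_eq_square)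
    then show ?thesis by (metis power_add)
  qed
  finally show ?case .
qed



definition th :: "'a::comm_ring_1 \<Rightarrow> nat \<Rightarrow> 'a" where
  "th q m = (\<Sum>j = - int m .. int m. (-1) ^ nat \<bar>j\<bar> * q ^ nat (j ^ 2))"

lemma th_Suc: "th q (Suc m) = th q m + 2 * (-1) ^ Suc m * q ^ (Suc m)\<^sup>2"
proof -
  have s: "{- int (Suc m) .. int (Suc m)} = insert (- int (Suc m)) (insert (int (Suc m)) {- int m .. int m})"
    by auto
  have n1: "nat \<bar>- int (Suc m)\<bar> = Suc m" "nat \<bar>int (Suc m)\<bar> = Suc m" by simp_all
  have n2: "nat ((- int (Suc m)) ^ 2) = (Suc m)\<^sup>2" "nat ((int (Suc m)) ^ 2) = (Suc m)\<^sup>2"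
    by (simp_all only: power2_minus nat_power_eq) simp_all
  let ?f = "\<lambda>j::int. (-1) ^ nat \<bar>j\<bar> * q ^ nat (j ^ 2)"
  have i: "sum ?f (insert (- int (Suc m)) (insert (int (Suc m)) {- int m .. int m})) =
     ?f (- int (Suc m)) + (?f (int (Suc m)) + sum ?f {- int m .. int m})"
    by (subst sum.insert) (auto simp: sum.insert)
  show ?thesis unfolding th_def s i n1 n2 by (simp add: algebra_simps)
qed

lemma AA_even: "AA q (2 * m) = th q m"
proof (induction m)
  case 0 then show ?case by (simp add: AA0 th_def)
next
  case (Suc m)
  have "AA q (2 * Suc m) = AA q (2 * m) + 2 * (-1) ^ Suc m * q ^ (Suc m)\<^sup>2"
    using AA_even_step[of q m] by (simp add: algebra_simps)
  then show ?case unfolding Suc th_Suc .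
qed

theorem theorem1p3:
  fixes q :: "'a::comm_ring_1" and n :: nat
  shows "(\<Sum>k=0..n. (-1) ^ k * over_qbinom n k q) =
         (if odd n then 0
          else (\<Sum>j = - (int n div 2) .. int n div 2. (-1) ^ nat \<bar>j\<bar> * q ^ nat (j ^ 2)))"
proof -
  have ob: "over_qbinom n k q = PP q (n - k) k" for k
    using W_PP[of q "n - k" k] unfolding W_def over_qbinom_def .
  have L: "(\<Sum>k=0..n. (-1) ^ k * over_qbinom n k q) = AA q n"
    unfolding AA_def ob atLeast0AtMost ..
  show ?thesis
  proof (cases "odd n")
    case True
    then obtain m where "n = 2 * m + 1" by (rule oddE)
    then show ?thesis using L AA_odd[of q m] True by simp
  next
    case False
    then obtain m where m: "n = 2 * m" by (metis evenE)
    have "int n div 2 = int m" using m by simp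
    then show ?thesis using L AA_even[of q m] False m unfolding th_def by simp
  qed
qed

end
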